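(* Let $M_1,\dots,M_k$ be pc monoids over mutually disjoint variable sets $X_1,\dots,X_k$. Suppose that for each $i$, $A_i$ is a randomized procedure that outputs an evaluation $v_i:\mathbb{F}\langle M_i\rangle\to\mathcal{M}_{t_i(d)}(\mathbb{F})$ such that for any polynomial $g_i\in\mathbb{F}\langle M_i\rangle$ of degree at most $d$, $g_i$ is nonzero if and only if $v_i(g_i)$ is a nonzero matrix, with probability at least $1-\frac{1}{2k}$. Then for the evaluation $\mathbf{v}=(v_1,\dots,v_k):\mathbb{F}\langle M_1\rangle\otimes\cdots\otimes\mathbb{F}\langle M_k\rangle\to\mathcal{M}_{t_1(d)}(\mathbb{F})\otimes\cdots\otimes\mathcal{M}_{t_k(d)}(\mathbb{F})$ and any nonzero polynomial $f\in\mathbb{F}\langle M_1\rangle\otimes\cdots\otimes\mathbb{F}\langle M_k\rangle$ of degree at most $d$, the matrix $\mathbf{v}(f)$ is nonzero with probability at least $1/2$.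
   Context: $\mathbb{F}$ is a field. A pc monoid $M=(X^*,I)$ over a finite alphabet $X$ with symmetric reflexive $I\subseteq X\times X$ consists of classes of words modulo the congruence generated by $xy=yx$ for $(x,y)\in I$; $\mathbb{F}\langle M\rangle$ is its monoid algebra (polynomials whose monomials are elements of $M$), with degree the maximal word length of a monomial. An evaluation $v:\mathbb{F}\langle M\rangle\to\mathcal{M}_t(\mathbb{F})$ is given by assigning matrices to the variables that respect the commutation relations, extended multiplicatively and linearly. The evaluation $\mathbf{v}=(v_1,\dots,v_k)$ on the tensor product is defined on $m_1\otimes\cdots\otimes m_k$ by $v_1(m_1)\otimes\cdots\otimes v_k(m_k)$ (Kronecker product) and extended linearly, where $v_1,\dots,v_k$ are the independent outputs of $A_1,\dots,A_k$. *)

theory Defs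
  imports "Jordan_Normal_Form.Matrix" "HOL-Probability.Product_PMF"
begin

definition swap_step :: "('x \<times> 'x) set \<Rightarrow> ('x list \<times> 'x list) set" where
  "swap_step I = {(u @ [x, y] @ v, u @ [y, x] @ v) | u v x y. (x, y) \<in> I}"

definition trace_equiv :: "('x \<times> 'x) set \<Rightarrow> ('x list \<times> 'x list) set" where
  "trace_equiv I = (swap_step I \<union> (swap_step I)\<inverse>)\<^sup>*"

definition pc_data :: "'x set \<Rightarrow> ('x \<times> 'x) set \<Rightarrow> bool" where
  "pc_data X I \<longleftrightarrow> finite X \<and> I \<subseteq> X \<times> X \<and> sym I \<and> (\<forall>x\<in>X. (x, x) \<in> I)"

definition pc_monoid :: "'x set \<Rightarrow> ('x \<times> 'x) set \<Rightarrow> 'x list set set" where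
  "pc_monoid X I = {w. set w \<subseteq> X} // trace_equiv I"

text \<open>Elements of F<M>: finitely supported coefficient functions on M.\<close>
definition poly_supp :: "('m \<Rightarrow> 'a::zero) \<Rightarrow> 'm set" where
  "poly_supp g = {m. g m \<noteq> 0}"

definition is_pc_poly :: "'x set \<Rightarrow> ('x \<times> 'x) set \<Rightarrow> ('x list set \<Rightarrow> 'a::zero) \<Rightarrow> bool" where
  "is_pc_poly X I g \<longleftrightarrow> finite (poly_supp g) \<and> poly_supp g \<subseteq> pc_monoid X I"

text \<open>Length of a monomial (all representatives have the same length).\<close>
definition mono_len :: "'x list set \<Rightarrow> nat" where
  "mono_len m = length (SOME w. w \<in> m)"

definition pc_degree :: "('x list set \<Rightarrow> 'a::zero) \<Rightarrow> nat" where
  "pc_degree g = Max (insert 0 (mono_len ` poly_supp g))"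

definition is_evaluation :: "'x set \<Rightarrow> ('x \<times> 'x) set \<Rightarrow> nat \<Rightarrow> ('x \<Rightarrow> 'a::field mat) \<Rightarrow> bool" where
  "is_evaluation X I t \<sigma> \<longleftrightarrow>
     (\<forall>x\<in>X. \<sigma> x \<in> carrier_mat t t) \<and> (\<forall>(x, y)\<in>I. \<sigma> x * \<sigma> y = \<sigma> y * \<sigma> x)"

definition eval_word :: "nat \<Rightarrow> ('x \<Rightarrow> 'a::field mat) \<Rightarrow> 'x list \<Rightarrow> 'a mat" where
  "eval_word t \<sigma> w = foldr (\<lambda>x M. \<sigma> x * M) w (1\<^sub>m t)"

definition eval_mono :: "nat \<Rightarrow> ('x \<Rightarrow> 'a::field mat) \<Rightarrow> 'x list set \<Rightarrow> 'a mat" where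
  "eval_mono t \<sigma> m = eval_word t \<sigma> (SOME w. w \<in> m)"

definition eval_poly :: "nat \<Rightarrow> ('x \<Rightarrow> 'a::field mat) \<Rightarrow> ('x list set \<Rightarrow> 'a) \<Rightarrow> 'a mat" where
  "eval_poly t \<sigma> g = Matrix.mat t t (\<lambda>(i, j). \<Sum>m\<in>poly_supp g. g m * eval_mono t \<sigma> m $$ (i, j))"

definition kron :: "'a::semiring_1 mat \<Rightarrow> 'a mat \<Rightarrow> 'a mat" where
  "kron A B = Matrix.mat (dim_row A * dim_row B) (dim_col A * dim_col B)
     (\<lambda>(i, j). A $$ (i div dim_row B, j div dim_col B) * B $$ (i mod dim_row B, j mod dim_col B))"

definition kron_list :: "'a::semiring_1 mat list \<Rightarrow> 'a mat" where
  "kron_list As = foldr kron As (1\<^sub>m 1)"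

text \<open>Elements of F<M_1> (x) ... (x) F<M_k>: finitely supported coefficient functions on
  tuples (m_1,...,m_k) (lists of length k) of monomials, m_i in M_i.\<close>
definition is_tensor_poly :: "nat \<Rightarrow> (nat \<Rightarrow> 'x set) \<Rightarrow> (nat \<Rightarrow> ('x \<times> 'x) set)
     \<Rightarrow> ('x list set list \<Rightarrow> 'a::zero) \<Rightarrow> bool" where
  "is_tensor_poly k X I f \<longleftrightarrow> finite (poly_supp f) \<and>
     (\<forall>ms\<in>poly_supp f. length ms = k \<and> (\<forall>i<k. ms ! i \<in> pc_monoid (X i) (I i)))"

text \<open>Degree of a tensor monomial m_1 (x) ... (x) m_k = m_1 ... m_k: total word length.\<close>
definition tensor_degree :: "('x list set list \<Rightarrow> 'a::zero) \<Rightarrow> nat" where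
  "tensor_degree f = Max (insert 0 ((\<lambda>ms. sum_list (map mono_len ms)) ` poly_supp f))"

definition eval_tensor :: "nat \<Rightarrow> (nat \<Rightarrow> nat) \<Rightarrow> (nat \<Rightarrow> 'x \<Rightarrow> 'a::field mat)
     \<Rightarrow> ('x list set list \<Rightarrow> 'a) \<Rightarrow> 'a mat" where
  "eval_tensor k t \<sigma>s f =
     (let n = prod t {..<k} in
      Matrix.mat n n (\<lambda>(i, j). \<Sum>ms\<in>poly_supp f.
         f ms * kron_list (map (\<lambda>l. eval_mono (t l) (\<sigma>s l) (ms ! l)) [0..<k]) $$ (i, j)))"

definition nonzero_mat :: "'a::zero mat \<Rightarrow> bool" where
  "nonzero_mat M \<longleftrightarrow> M \<noteq> 0\<^sub>m (dim_row M) (dim_col M)"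

end

theory Submission
  imports Defs
begin


lemma trace_equiv_set:
  assumes "(u, w) \<in> trace_equiv I" shows "set w = set u"
  using assms unfolding trace_equiv_def
proof (induction rule: rtrancl_induct)
  case base then show ?case by simp
next
  case (step y z)
  then show ?case unfolding swap_step_def by auto
qed

lemma pc_monoid_some:
  assumes "m \<in> pc_monoid X I"
  shows "(SOME w. w \<in> m) \<in> m \<and> set (SOME w. w \<in> m) \<subseteq> X"
proof -
  obtain u where u: "set u \<subseteq> X" "m = trace_equiv I `` {u}"
    using assms unfolding pc_monoid_def quotient_def by auto
  have "u \<in> m" using u unfolding trace_equiv_def by auto
  then have "(SOME w. w \<in> m) \<in> m" by (rule someI)
  moreover have "\<And>w. w \<in> m \<Longrightarrow> set w \<subseteq> X"
    using u trace_equiv_set by fastforce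
  ultimately show ?thesis by blast
qed

lemma eval_word_carrier:
  assumes "\<And>x. x \<in> set w \<Longrightarrow> \<sigma> x \<in> carrier_mat t t"
  shows "eval_word t \<sigma> w \<in> carrier_mat t t"
  using assms by (induction w) (auto simp: eval_word_def intro!: mult_carrier_mat)

lemma eval_mono_carrier:
  assumes "m \<in> pc_monoid X I" "is_evaluation X I t \<sigma>"
  shows "eval_mono t \<sigma> m \<in> carrier_mat t t"
  unfolding eval_mono_def
  by (rule eval_word_carrier) (use pc_monoid_some[OF assms(1)] assms(2) in \<open>auto simp: is_evaluation_def\<close>)

lemma dim_kron_list:
  "dim_row (kron_list L) = prod_list (map dim_row L)"
  "dim_col (kron_list L) = prod_list (map dim_col L)"
  by (induction L) (auto simp: kron_list_def kron_def)

lemma kron_list_snoc: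
  assumes "i < dim_row (kron_list L)" "j < dim_col (kron_list L)" "a < dim_row Y" "b < dim_col Y"
  shows "kron_list (L @ [Y]) $$ (i * dim_row Y + a, j * dim_col Y + b) = kron_list L $$ (i,j) * Y $$ (a,b)"
  using assms
proof (induction L arbitrary: i j)
  case Nil
  then show ?case by (simp add: kron_list_def kron_def)
next
  case (Cons Z L)
  let ?P = "dim_row (kron_list L)" and ?Q = "dim_col (kron_list L)"
  let ?r = "dim_row Y" and ?c = "dim_col Y"
  have dr: "dim_row (kron_list (L @ [Y])) = ?P * ?r" "dim_col (kron_list (L @ [Y])) = ?Q * ?c"
    by (simp_all add: dim_kron_list)
  have i: "i < dim_row Z * ?P" and j: "j < dim_col Z * ?Q"
    using Cons.prems by (simp_all add: kron_list_def kron_def)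
  then have P: "?P > 0" and Q: "?Q > 0" by (auto intro: ccontr)
  have lt1: "i * ?r + a < dim_row Z * (?P * ?r)"
  proof -
    have "i + 1 \<le> dim_row Z * ?P" using i by simp
    then have "(i + 1) * ?r \<le> dim_row Z * ?P * ?r" by (rule mult_right_mono) simp
    then show ?thesis using Cons.prems(3) by (simp add: algebra_simps)
  qed
  have lt2: "j * ?c + b < dim_col Z * (?Q * ?c)"
  proof -
    have "j + 1 \<le> dim_col Z * ?Q" using j by simp
    then have "(j + 1) * ?c \<le> dim_col Z * ?Q * ?c" by (rule mult_right_mono) simp
    then show ?thesis using Cons.prems(4) by (simp add: algebra_simps)
  qed
  have e1: "(i * ?r + a) div ?r = i" using Cons.prems(3) by simp
  have e2: "(j * ?c + b) div ?c = j" using Cons.prems(4) by simp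
  have d1: "(i * ?r + a) div (?P * ?r) = i div ?P"
    using e1 by (metis div_mult2_eq mult.commute)
  have d2: "(j * ?c + b) div (?Q * ?c) = j div ?Q"
    using e2 by (metis div_mult2_eq mult.commute)
  have m1: "(i * ?r + a) mod (?P * ?r) = (i mod ?P) * ?r + a"
    using Cons.prems(3) by (simp add: mod_mult2_eq mult.commute)
  have m2: "(j * ?c + b) mod (?Q * ?c) = (j mod ?Q) * ?c + b"
    using Cons.prems(4) by (simp add: mod_mult2_eq mult.commute)
  have IH: "kron_list (L @ [Y]) $$ ((i mod ?P) * ?r + a, (j mod ?Q) * ?c + b)
      = kron_list L $$ (i mod ?P, j mod ?Q) * Y $$ (a, b)"
    using Cons.IH P Q Cons.prems by simp
  have "kron_list ((Z # L) @ [Y]) = kron Z (kron_list (L @ [Y]))" by (simp add: kron_list_def)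
  then have "kron_list ((Z # L) @ [Y]) $$ (i * ?r + a, j * ?c + b)
     = Z $$ (i div ?P, j div ?Q) * (kron_list L $$ (i mod ?P, j mod ?Q) * Y $$ (a, b))"
    using lt1 lt2 d1 d2 m1 m2 IH dr by (simp add: kron_def)
  moreover have "kron_list (Z # L) $$ (i, j) = Z $$ (i div ?P, j div ?Q) * kron_list L $$ (i mod ?P, j mod ?Q)"
    using i j by (simp add: kron_list_def kron_def)
  ultimately show ?case by (simp add: mult.assoc)
qed

lemma bind_prob_lower:
  fixes c :: real
  assumes "c \<ge> 0" "\<And>y. y \<in> set_pmf p \<Longrightarrow> y \<in> G \<Longrightarrow> measure_pmf.prob (q y) E \<ge> c"
  shows "measure_pmf.prob (bind_pmf p q) E \<ge> measure_pmf.prob p G * c"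
proof -
  have "emeasure (measure_pmf (bind_pmf p q)) E = (\<integral>\<^sup>+y. emeasure (measure_pmf (q y)) E \<partial>p)"
    by simp
  also have "\<dots> \<ge> (\<integral>\<^sup>+y. ennreal c * indicator G y \<partial>p)"
    using assms(2) by (intro nn_integral_mono_AE)
      (auto simp: AE_measure_pmf_iff measure_pmf.emeasure_eq_measure indicator_def)
  finally have "ennreal c * emeasure (measure_pmf p) G \<le> emeasure (measure_pmf (bind_pmf p q)) E"
    by (simp add: nn_integral_cmult_indicator)
  then have "ennreal (c * measure_pmf.prob p G) \<le> ennreal (measure_pmf.prob (bind_pmf p q) E)"
    by (simp add: measure_pmf.emeasure_eq_measure ennreal_mult assms(1) mult.commute)
  then show ?thesis by (simp add: mult.commute)
qed

lemma prod_list_upt: "prod_list (map t [0..<k]) = prod t {..<k}"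
  by (induction k) (auto simp: lessThan_Suc mult.commute)

lemma nonzero_mat_iff: "nonzero_mat M \<longleftrightarrow> (\<exists>i<dim_row M. \<exists>j<dim_col M. M $$ (i,j) \<noteq> 0)"
proof
  assume "nonzero_mat M"
  then show "\<exists>i<dim_row M. \<exists>j<dim_col M. M $$ (i,j) \<noteq> 0"
    unfolding nonzero_mat_def by (auto intro!: eq_matI)
next
  assume "\<exists>i<dim_row M. \<exists>j<dim_col M. M $$ (i,j) \<noteq> 0"
  then obtain i j where "i < dim_row M" "j < dim_col M" "M $$ (i,j) \<noteq> 0" by blast
  then show "nonzero_mat M" unfolding nonzero_mat_def by (metis index_zero_mat(1))
qed



lemma main_gen:
  fixes A :: "nat \<Rightarrow> ('x \<Rightarrow> 'a::field mat) pmf" and \<epsilon> :: real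
    and X :: "nat \<Rightarrow> 'x set" and I :: "nat \<Rightarrow> ('x \<times> 'x) set" and t :: "nat \<Rightarrow> nat"
  assumes eps: "\<epsilon> \<ge> 0"
    and ev: "\<And>i \<sigma>. i < K \<Longrightarrow> \<sigma> \<in> set_pmf (A i) \<Longrightarrow> is_evaluation (X i) (I i) (t i) \<sigma>"
    and good: "\<And>i g. i < K \<Longrightarrow> is_pc_poly (X i) (I i) g \<Longrightarrow> pc_degree g \<le> d \<Longrightarrow> g \<noteq> (\<lambda>_. 0) \<Longrightarrow>
        measure_pmf.prob (A i) {\<sigma>. nonzero_mat (eval_poly (t i) \<sigma> g)} \<ge> 1 - \<epsilon>"
  shows "k \<le> K \<Longrightarrow> is_tensor_poly k X I (f :: 'x list set list \<Rightarrow> 'a) \<Longrightarrow> f \<noteq> (\<lambda>_. 0) \<Longrightarrow> tensor_degree f \<le> d \<Longrightarrow>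
     measure_pmf.prob (Pi_pmf {..<k} dflt A) {\<sigma>s. nonzero_mat (eval_tensor k t \<sigma>s f)} \<ge> 1 - real k * \<epsilon>"
proof (induction k arbitrary: f)
  case 0
  have S: "poly_supp f \<subseteq> {[]}" using 0 by (auto simp: is_tensor_poly_def)
  obtain x where "f x \<noteq> 0" using 0 by auto
  then have "x \<in> poly_supp f" by (simp add: poly_supp_def)
  then have x: "x = []" using S by auto
  then have S': "poly_supp f = {[]}" using S \<open>x \<in> poly_supp f\<close> by auto
  have "\<And>\<sigma>s. eval_tensor 0 t \<sigma>s f $$ (0,0) = f []"
    by (simp add: eval_tensor_def S' kron_list_def)
  then have "\<And>\<sigma>s. nonzero_mat (eval_tensor 0 t \<sigma>s f)"
    using \<open>f x \<noteq> 0\<close> x by (subst nonzero_mat_iff) (auto simp: eval_tensor_def)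
  then show ?case by simp
next
  case (Suc k)
  note kK = \<open>Suc k \<le> K\<close>
  show ?case
  proof (cases "1 - real (Suc k) * \<epsilon> \<le> 0")
    case True
    then show ?thesis by (smt (verit) measure_nonneg)
  next
    case False
    then have c0: "1 - real k * \<epsilon> \<ge> 0" using eps by (simp add: algebra_simps)
    define S where "S = poly_supp f"
    have finS: "finite S" using Suc.prems by (simp add: S_def is_tensor_poly_def)
    have Slen: "\<And>ms. ms \<in> S \<Longrightarrow> length ms = Suc k"
      and Spc: "\<And>ms i. ms \<in> S \<Longrightarrow> i < Suc k \<Longrightarrow> ms ! i \<in> pc_monoid (X i) (I i)"
      using Suc.prems by (auto simp: S_def is_tensor_poly_def)
    have Sdeg: "sum_list (map mono_len ms) \<le> d" if "ms \<in> S" for ms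
    proof -
      have "sum_list (map mono_len ms) \<le> tensor_degree f"
        unfolding tensor_degree_def using that finS by (intro Max_ge) (auto simp: S_def)
      then show ?thesis using Suc.prems by simp
    qed
    have Sf: "\<And>ms. ms \<in> S \<longleftrightarrow> f ms \<noteq> 0" by (simp add: S_def poly_supp_def)
    have Ssplit: "ms = butlast ms @ [last ms]" if "ms \<in> S" for ms
      using Slen[OF that] by (metis append_butlast_last_id list.size(3) nat.distinct(1))
    have Sbl: "length (butlast ms) = k" if "ms \<in> S" for ms using Slen[OF that] by simp
    obtain ms0 where ms0: "ms0 \<in> S" using Suc.prems by (auto simp: S_def poly_supp_def)
    define r0 where "r0 = butlast ms0"
    have lr0: "length r0 = k" using Sbl[OF ms0] by (simp add: r0_def)
    define g where "g = (\<lambda>m. f (r0 @ [m]))"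
    have suppg: "poly_supp g = (\<lambda>m. r0 @ [m]) -` S" by (auto simp: poly_supp_def g_def S_def)
    have fing: "finite (poly_supp g)" unfolding suppg
      by (rule finite_vimageI[OF finS]) (auto simp: inj_on_def)
    have gpc: "is_pc_poly (X k) (I k) g"
      unfolding is_pc_poly_def
    proof (intro conjI fing subsetI)
      fix m assume "m \<in> poly_supp g"
      then have "r0 @ [m] \<in> S" by (simp add: suppg)
      from Spc[OF this, of k] show "m \<in> pc_monoid (X k) (I k)" using lr0 by (metis lessI nth_append_length)
    qed
    have gdeg: "pc_degree g \<le> d"
      unfolding pc_degree_def
    proof (subst Max_le_iff, simp_all add: fing, intro ballI)
      fix m assume "m \<in> poly_supp g"
      then have "r0 @ [m] \<in> S" by (simp add: suppg)
      from Sdeg[OF this] show "mono_len m \<le> d" by simp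
    qed
    have gnz: "g \<noteq> (\<lambda>_. 0)"
    proof
      assume "g = (\<lambda>_. 0)"
      then have "g (last ms0) = 0" by simp
      moreover have "g (last ms0) = f ms0" using Ssplit[OF ms0] by (simp add: g_def r0_def)
      ultimately show False using ms0 Sf by simp
    qed
    define G where "G = {\<sigma>. nonzero_mat (eval_poly (t k) \<sigma> g)}"
    have Gp: "measure_pmf.prob (A k) G \<ge> 1 - \<epsilon>"
      unfolding G_def using good[of k g] kK gpc gdeg gnz by simp
    define B where "B = Pi_pmf {..<k} dflt A"
    define E where "E = {\<sigma>s. nonzero_mat (eval_tensor (Suc k) t \<sigma>s f)}"
    have Pi: "Pi_pmf {..<Suc k} dflt A = bind_pmf (A k) (\<lambda>y. map_pmf (\<lambda>h. h(k:=y)) B)"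
      by (simp add: lessThan_Suc Pi_pmf_insert' map_pmf_def B_def)
    have key: "measure_pmf.prob (map_pmf (\<lambda>h. h(k:=y)) B) E \<ge> 1 - real k * \<epsilon>"
      if y: "y \<in> set_pmf (A k)" "y \<in> G" for y
    proof -
      have yev: "is_evaluation (X k) (I k) (t k) y" using ev[of k y] kK y by simp
      obtain a b where ab: "a < t k" "b < t k" "eval_poly (t k) y g $$ (a,b) \<noteq> 0"
        using y(2) unfolding G_def nonzero_mat_iff by (auto simp: eval_poly_def)
      define Y where "Y = (\<lambda>m. eval_mono (t k) y m $$ (a,b))"
      have ep: "eval_poly (t k) y g $$ (a,b) = (\<Sum>m\<in>poly_supp g. g m * Y m)"
        using ab by (simp add: eval_poly_def Y_def)
      define f' where "f' = (\<lambda>r. \<Sum>ms\<in>{ms\<in>S. butlast ms = r}. f ms * Y (last ms))"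
      have supp': "poly_supp f' \<subseteq> butlast ` S"
      proof
        fix r assume "r \<in> poly_supp f'"
        show "r \<in> butlast ` S"
        proof (rule ccontr)
          assume "r \<notin> butlast ` S"
          then have E0: "{ms\<in>S. butlast ms = r} = {}" by auto
          have "f' r = 0" unfolding f'_def E0 by (rule sum.empty)
          with \<open>r \<in> poly_supp f'\<close> show False by (simp add: poly_supp_def)
        qed
      qed
      have fin': "finite (poly_supp f')" using supp' finS finite_subset by blast
      have tp0: "\<forall>r\<in>poly_supp f'. length r = k \<and> (\<forall>i<k. r ! i \<in> pc_monoid (X i) (I i))"
      proof
        fix r assume "r \<in> poly_supp f'"
        then obtain ms where ms: "ms \<in> S" "r = butlast ms" using supp' by auto
        show "length r = k \<and> (\<forall>i<k. r ! i \<in> pc_monoid (X i) (I i))"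
          using ms Sbl[OF ms(1)] Spc[OF ms(1)] by (simp add: nth_butlast)
      qed
      have tp': "is_tensor_poly k X I f'"
        unfolding is_tensor_poly_def using fin' tp0 by blast
      have deg': "tensor_degree f' \<le> d"
        unfolding tensor_degree_def
      proof (subst Max_le_iff, simp_all add: fin', intro ballI)
        fix r assume "r \<in> poly_supp f'"
        then obtain ms where ms: "ms \<in> S" "r = butlast ms" using supp' by auto
        have e1: "sum_list (map mono_len ms) = sum_list (map mono_len (butlast ms @ [last ms]))"
          using Ssplit[OF ms(1)] by (rule arg_cong)
        have e2: "sum_list (map mono_len (butlast ms @ [last ms])) = sum_list (map mono_len r) + mono_len (last ms)"
          using ms(2) by simp
        have "sum_list (map mono_len ms) = sum_list (map mono_len r) + mono_len (last ms)"
          using e1 e2 by simp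
        then show "sum_list (map mono_len r) \<le> d" using Sdeg[OF ms(1)] by linarith
      qed
      have bij: "bij_betw (\<lambda>m. r0 @ [m]) (poly_supp g) {ms\<in>S. butlast ms = r0}"
        unfolding bij_betw_def
      proof
        show "inj_on (\<lambda>m. r0 @ [m]) (poly_supp g)" by (auto simp: inj_on_def)
        show "(\<lambda>m. r0 @ [m]) ` poly_supp g = {ms \<in> S. butlast ms = r0}"
        proof (intro equalityI subsetI)
          fix ms assume "ms \<in> (\<lambda>m. r0 @ [m]) ` poly_supp g"
          then show "ms \<in> {ms \<in> S. butlast ms = r0}" by (auto simp: suppg)
        next
          fix ms assume "ms \<in> {ms \<in> S. butlast ms = r0}"
          then have "ms \<in> S" "butlast ms = r0" by auto
          then have "ms = r0 @ [last ms]" using Ssplit by metis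
          then show "ms \<in> (\<lambda>m. r0 @ [m]) ` poly_supp g"
            using \<open>ms \<in> S\<close> by (metis (no_types, lifting) image_eqI suppg vimageI)
        qed
      qed
      have "f' r0 = (\<Sum>m\<in>poly_supp g. f (r0 @ [m]) * Y (last (r0 @ [m])))"
        unfolding f'_def by (rule sum.reindex_bij_betw[OF bij, symmetric])
      also have "\<dots> = (\<Sum>m\<in>poly_supp g. g m * Y m)" by (simp add: g_def)
      finally have "f' r0 \<noteq> 0" using ab ep by simp
      then have nz': "f' \<noteq> (\<lambda>_. 0)" by auto
      have IH: "measure_pmf.prob B {h. nonzero_mat (eval_tensor k t h f')} \<ge> 1 - real k * \<epsilon>"
        using Suc.IH[OF _ tp' nz' deg'] kK by (simp add: B_def)
      have sub: "{h. nonzero_mat (eval_tensor k t h f')} \<inter> set_pmf B \<subseteq> (\<lambda>h. h(k:=y)) -` E"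
      proof
        fix h assume h: "h \<in> {h. nonzero_mat (eval_tensor k t h f')} \<inter> set_pmf B"
        have hev: "is_evaluation (X l) (I l) (t l) (h l)" if "l < k" for l
        proof -
          have "h l \<in> set_pmf (A l)" using h that by (auto simp: B_def set_Pi_pmf PiE_dflt_def)
          then show ?thesis using ev[of l] that kK by simp
        qed
        define N where "N = prod t {..<k}"
        obtain i j where ij: "i < N" "j < N" "eval_tensor k t h f' $$ (i,j) \<noteq> 0"
          using h unfolding nonzero_mat_iff by (auto simp: eval_tensor_def N_def Let_def)
        define Kr where "Kr = (\<lambda>r. kron_list (map (\<lambda>l. eval_mono (t l) (h l) (r ! l)) [0..<k]))"
        have "eval_tensor k t h f' $$ (i,j) = (\<Sum>r\<in>poly_supp f'. f' r * Kr r $$ (i,j))"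
          using ij by (simp add: eval_tensor_def Let_def N_def Kr_def)
        also have "\<dots> = (\<Sum>r\<in>butlast ` S. f' r * Kr r $$ (i,j))"
          by (rule sum.mono_neutral_left) (use finS supp' in \<open>auto simp: poly_supp_def\<close>)
        also have "\<dots> = (\<Sum>r\<in>butlast ` S. \<Sum>ms\<in>{ms\<in>S. butlast ms = r}. f ms * Y (last ms) * Kr (butlast ms) $$ (i,j))"
          unfolding f'_def sum_distrib_right by (rule sum.cong) auto
        also have "\<dots> = (\<Sum>ms\<in>S. f ms * Y (last ms) * Kr (butlast ms) $$ (i,j))"
          by (rule sum.group) (use finS in auto)
        finally have rhs: "eval_tensor k t h f' $$ (i,j) = (\<Sum>ms\<in>S. f ms * Y (last ms) * Kr (butlast ms) $$ (i,j))" .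
        have idx1: "i * t k + a < N * t k"
        proof -
          have "(i + 1) * t k \<le> N * t k" using ij by (intro mult_right_mono) auto
          then show ?thesis using ab by (simp add: algebra_simps)
        qed
        have idx2: "j * t k + b < N * t k"
        proof -
          have "(j + 1) * t k \<le> N * t k" using ij by (intro mult_right_mono) auto
          then show ?thesis using ab by (simp add: algebra_simps)
        qed
        have NS: "prod t {..<Suc k} = N * t k" by (simp add: N_def lessThan_Suc mult.commute)
        have trm: "kron_list (map (\<lambda>l. eval_mono (t l) ((h(k:=y)) l) (ms ! l)) [0..<Suc k]) $$ (i * t k + a, j * t k + b)
             = Kr (butlast ms) $$ (i,j) * Y (last ms)" if ms: "ms \<in> S" for ms
        proof -
          define L where "L = map (\<lambda>l. eval_mono (t l) (h l) (butlast ms ! l)) [0..<k]"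
          define Z where "Z = eval_mono (t k) y (last ms)"
          have lms: "last ms = ms ! k" using Slen[OF ms] by (metis diff_Suc_1 last_conv_nth list.size(3) nat.distinct(1))
          have mapeq: "map (\<lambda>l. eval_mono (t l) ((h(k:=y)) l) (ms ! l)) [0..<Suc k] = L @ [Z]"
            using Sbl[OF ms] lms by (simp add: L_def Z_def nth_butlast)
          have cL: "eval_mono (t l) (h l) (butlast ms ! l) \<in> carrier_mat (t l) (t l)" if l: "l < k" for l
          proof -
            have "butlast ms ! l = ms ! l" using Sbl[OF ms] l by (simp add: nth_butlast)
            then show ?thesis using eval_mono_carrier[OF Spc[OF ms, of l] hev[OF l]] l by simp
          qed
          have dimsL: "map dim_row L = map t [0..<k]" "map dim_col L = map t [0..<k]"
          proof -
            have dr: "dim_row (eval_mono (t l) (h l) (butlast ms ! l)) = t l"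
              and dc: "dim_col (eval_mono (t l) (h l) (butlast ms ! l)) = t l" if "l < k" for l
              using cL[OF that] by auto
            show "map dim_row L = map t [0..<k]" unfolding L_def map_map
              by (intro map_cong refl) (simp add: dr)
            show "map dim_col L = map t [0..<k]" unfolding L_def map_map
              by (intro map_cong refl) (simp add: dc)
          qed
          have dKL: "dim_row (kron_list L) = N" "dim_col (kron_list L) = N"
            by (simp_all add: dim_kron_list dimsL prod_list_upt N_def)
          have Zc: "Z \<in> carrier_mat (t k) (t k)"
            unfolding Z_def lms using eval_mono_carrier[OF Spc[OF ms, of k] yev] by simp
          have "kron_list (L @ [Z]) $$ (i * dim_row Z + a, j * dim_col Z + b) = kron_list L $$ (i,j) * Z $$ (a,b)"
            by (rule kron_list_snoc) (use dKL Zc ij ab in auto)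
          moreover have "Kr (butlast ms) = kron_list L" by (simp add: Kr_def L_def)
          ultimately show ?thesis using Zc mapeq by (simp add: Y_def Z_def)
        qed
        have "eval_tensor (Suc k) t (h(k:=y)) f $$ (i * t k + a, j * t k + b)
            = (\<Sum>ms\<in>S. f ms * kron_list (map (\<lambda>l. eval_mono (t l) ((h(k:=y)) l) (ms ! l)) [0..<Suc k]) $$ (i * t k + a, j * t k + b))"
        proof -
          have "eval_tensor (Suc k) t (h(k:=y)) f = Matrix.mat (N * t k) (N * t k) (\<lambda>(i, j). \<Sum>ms\<in>S.
              f ms * kron_list (map (\<lambda>l. eval_mono (t l) ((h(k:=y)) l) (ms ! l)) [0..<Suc k]) $$ (i, j))"
            by (simp only: eval_tensor_def Let_def NS S_def)
          then show ?thesis by (simp only: index_mat(1) idx1 idx2 split prod.case)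
        qed
        also have "\<dots> = (\<Sum>ms\<in>S. f ms * Y (last ms) * Kr (butlast ms) $$ (i,j))"
        proof (rule sum.cong[OF refl])
          fix ms assume "ms \<in> S"
          show "f ms * kron_list (map (\<lambda>l. eval_mono (t l) ((h(k:=y)) l) (ms ! l)) [0..<Suc k]) $$ (i * t k + a, j * t k + b)
              = f ms * Y (last ms) * Kr (butlast ms) $$ (i,j)"
            unfolding trm[OF \<open>ms \<in> S\<close>] by (simp add: mult_ac)
        qed
        finally have "eval_tensor (Suc k) t (h(k:=y)) f $$ (i * t k + a, j * t k + b) \<noteq> 0"
          using rhs ij by simp
        then have "nonzero_mat (eval_tensor (Suc k) t (h(k:=y)) f)"
          using idx1 idx2 NS by (subst nonzero_mat_iff) (auto simp: eval_tensor_def Let_def)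
        then show "h \<in> (\<lambda>h. h(k:=y)) -` E" by (simp add: E_def)
      qed
      have "measure_pmf.prob B {h. nonzero_mat (eval_tensor k t h f')}
          = measure_pmf.prob B ({h. nonzero_mat (eval_tensor k t h f')} \<inter> set_pmf B)"
        by (simp add: measure_Int_set_pmf)
      also have "\<dots> \<le> measure_pmf.prob B ((\<lambda>h. h(k:=y)) -` E)"
        by (rule measure_pmf.finite_measure_mono[OF sub]) simp
      finally show ?thesis using IH by simp
    qed
    have "measure_pmf.prob (bind_pmf (A k) (\<lambda>y. map_pmf (\<lambda>h. h(k:=y)) B)) E
        \<ge> measure_pmf.prob (A k) G * (1 - real k * \<epsilon>)"
      by (rule bind_prob_lower[OF c0 key])
    moreover have "measure_pmf.prob (A k) G * (1 - real k * \<epsilon>) \<ge> (1 - \<epsilon>) * (1 - real k * \<epsilon>)"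
      by (rule mult_right_mono[OF Gp c0])
    moreover have "(1 - \<epsilon>) * (1 - real k * \<epsilon>) \<ge> 1 - real (Suc k) * \<epsilon>"
      using eps by (simp add: algebra_simps)
    ultimately show ?thesis unfolding Pi E_def by linarith
  qed
qed


theorem lemma14:
  fixes k :: nat
    and X :: "nat \<Rightarrow> 'x set"
    and I :: "nat \<Rightarrow> ('x \<times> 'x) set"
    and t :: "nat \<Rightarrow> nat"
    and d :: nat
    and A :: "nat \<Rightarrow> ('x \<Rightarrow> 'a::field mat) pmf"
    and f :: "'x list set list \<Rightarrow> 'a"
  assumes "k > 0"
    and pc: "\<And>i. i < k \<Longrightarrow> pc_data (X i) (I i)"
    and disj: "\<And>i j. i < k \<Longrightarrow> j < k \<Longrightarrow> i \<noteq> j \<Longrightarrow> X i \<inter> X j = {}"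
    and outputs_eval: "\<And>i \<sigma>. i < k \<Longrightarrow> \<sigma> \<in> set_pmf (A i) \<Longrightarrow> is_evaluation (X i) (I i) (t i) \<sigma>"
    and A_good: "\<And>i g. i < k \<Longrightarrow> is_pc_poly (X i) (I i) g \<Longrightarrow> pc_degree g \<le> d \<Longrightarrow>
        measure_pmf.prob (A i)
          {\<sigma>. g \<noteq> (\<lambda>_. 0) \<longleftrightarrow> nonzero_mat (eval_poly (t i) \<sigma> g)} \<ge> 1 - 1 / (2 * real k)"
    and f_poly: "is_tensor_poly k X I f"
    and f_nz: "f \<noteq> (\<lambda>_. 0)"
    and f_deg: "tensor_degree f \<le> d"
  shows "measure_pmf.prob (Pi_pmf {..<k} undefined A)
           {\<sigma>s. nonzero_mat (eval_tensor k t \<sigma>s f)} \<ge> 1 / 2"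
proof -
  have eps: "1 / (2 * real k) \<ge> 0" by simp
  have good': "measure_pmf.prob (A i) {\<sigma>. nonzero_mat (eval_poly (t i) \<sigma> g)} \<ge> 1 - 1 / (2 * real k)"
    if "i < k" "is_pc_poly (X i) (I i) g" "pc_degree g \<le> d" "g \<noteq> (\<lambda>_. 0)" for i g
    using A_good[OF that(1-3)] that(4) by simp
  have "measure_pmf.prob (Pi_pmf {..<k} undefined A) {\<sigma>s. nonzero_mat (eval_tensor k t \<sigma>s f)}
      \<ge> 1 - real k * (1 / (2 * real k))"
    by (rule main_gen[OF eps outputs_eval good' le_refl f_poly f_nz f_deg])
  moreover have "1 - real k * (1 / (2 * real k)) = 1 / 2" using \<open>k > 0\<close> by simp
  ultimately show ?thesis by simp
qed

end
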